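(* Let $X$ be a set and let $\mathcal{L}$ be a nest on $X$ satisfying condition (C3). Then $\mathcal{T}_{\mathcal{L}}=\mathcal{T}_l$.
   Context: A nest on $X$ is a family $\mathcal{L}$ of subsets of $X$ such that for all $M,N\in\mathcal{L}$, either $M\subseteq N$ or $N\subseteq M$. Define $x\triangleleft_{\mathcal{L}} y$ iff there exists $L\in\mathcal{L}$ with $x\in L$ and $y\notin L$, and $x\trianglelefteq_{\mathcal{L}} y$ iff $x=y$ or $x\triangleleft_{\mathcal{L}} y$. Suprema are taken with respect to $\trianglelefteq_{\mathcal{L}}$. Condition (C2): for each $L\in\mathcal{L}$, $\sup L$ exists in $X$ and $\sup L\in X-L$. Condition (C3): for each $x\in X$ there exists $L\in\mathcal{L}$ such that $\sup L = x$ and $x\in X-L$, and moreover (C2) holds. $\mathcal{T}_{\mathcal{L}}$ is the topology on $X$ generated by $\mathcal{L}$ as a subbase. For $k\in X$ let ${\uparrow}k=\{y\in X : k\trianglelefteq_{\mathcal{L}} y\}$; the lower topology $\mathcal{T}_l$ is the topology generated by the subbase $\{X-{\uparrow}k : k\in X\}$. *)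

theory Defs
  imports "HOL-Analysis.Analysis"
begin

definition nest_on :: "'a set \<Rightarrow> 'a set set \<Rightarrow> bool" where
  "nest_on X \<L> \<longleftrightarrow> (\<forall>L\<in>\<L>. L \<subseteq> X) \<and> (\<forall>M\<in>\<L>. \<forall>N\<in>\<L>. M \<subseteq> N \<or> N \<subseteq> M)"

definition nest_less :: "'a set set \<Rightarrow> 'a \<Rightarrow> 'a \<Rightarrow> bool" where
  "nest_less \<L> x y \<longleftrightarrow> (\<exists>L\<in>\<L>. x \<in> L \<and> y \<notin> L)"

definition nest_le :: "'a set set \<Rightarrow> 'a \<Rightarrow> 'a \<Rightarrow> bool" where
  "nest_le \<L> x y \<longleftrightarrow> x = y \<or> nest_less \<L> x y"

definition is_nest_sup :: "'a set \<Rightarrow> 'a set set \<Rightarrow> 'a set \<Rightarrow> 'a \<Rightarrow> bool" where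
  "is_nest_sup X \<L> A s \<longleftrightarrow> s \<in> X \<and> (\<forall>a\<in>A. nest_le \<L> a s) \<and>
     (\<forall>u\<in>X. (\<forall>a\<in>A. nest_le \<L> a u) \<longrightarrow> nest_le \<L> s u)"

definition cond_C2 :: "'a set \<Rightarrow> 'a set set \<Rightarrow> bool" where
  "cond_C2 X \<L> \<longleftrightarrow> (\<forall>L\<in>\<L>. \<exists>s. is_nest_sup X \<L> L s \<and> s \<in> X - L)"

definition cond_C3 :: "'a set \<Rightarrow> 'a set set \<Rightarrow> bool" where
  "cond_C3 X \<L> \<longleftrightarrow> (\<forall>x\<in>X. \<exists>L\<in>\<L>. is_nest_sup X \<L> L x \<and> x \<in> X - L) \<and> cond_C2 X \<L>"

definition subbase_topology :: "'a set \<Rightarrow> 'a set set \<Rightarrow> 'a topology" where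
  "subbase_topology X S = topology (arbitrary union_of (finite intersection_of (\<lambda>U. U \<in> S) relative_to X))"

definition nest_up :: "'a set \<Rightarrow> 'a set set \<Rightarrow> 'a \<Rightarrow> 'a set" where
  "nest_up X \<L> k = {y\<in>X. nest_le \<L> k y}"

definition lower_topology :: "'a set \<Rightarrow> 'a set set \<Rightarrow> 'a topology" where
  "lower_topology X \<L> = subbase_topology X {X - nest_up X \<L> k | k. k \<in> X}"

end

theory Submission
  imports Defs
begin

lemma key:
  assumes n: "nest_on X \<L>" and s: "is_nest_sup X \<L> A k" and A: "A \<in> \<L>" and k: "k \<notin> A"
  shows "X - nest_up X \<L> k = A"
proof
  show "X - nest_up X \<L> k \<subseteq> A"
  proof
    fix y assume y: "y \<in> X - nest_up X \<L> k"
    show "y \<in> A"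
    proof (rule ccontr)
      assume "y \<notin> A"
      hence "\<forall>a\<in>A. nest_le \<L> a y" using A unfolding nest_le_def nest_less_def by blast
      hence "nest_le \<L> k y" using s y unfolding is_nest_sup_def by blast
      thus False using y unfolding nest_up_def by blast
    qed
  qed
next
  show "A \<subseteq> X - nest_up X \<L> k"
  proof
    fix y assume y: "y \<in> A"
    have yX: "y \<in> X" using n A y unfolding nest_on_def by blast
    have "nest_le \<L> y k" using s y unfolding is_nest_sup_def by blast
    then obtain L where L: "L \<in> \<L>" "y \<in> L" "k \<notin> L"
      using y k unfolding nest_le_def nest_less_def by blast
    have "\<not> nest_le \<L> k y"
    proof
      assume "nest_le \<L> k y"
      then consider "k = y" | M where "M \<in> \<L>" "k \<in> M" "y \<notin> M"
        unfolding nest_le_def nest_less_def by blast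
      thus False
      proof cases
        case 1 thus ?thesis using y k by simp
      next
        case 2 thus ?thesis using L n unfolding nest_on_def by blast
      qed
    qed
    thus "y \<in> X - nest_up X \<L> k" using yX unfolding nest_up_def by blast
  qed
qed

theorem theorem3p1:
  fixes X :: "'a set" and \<L> :: "'a set set"
  assumes "nest_on X \<L>" and "cond_C3 X \<L>"
  shows "subbase_topology X \<L> = lower_topology X \<L>"
proof -
  have "{X - nest_up X \<L> k | k. k \<in> X} = \<L>"
  proof
    show "{X - nest_up X \<L> k | k. k \<in> X} \<subseteq> \<L>"
    proof
      fix U assume "U \<in> {X - nest_up X \<L> k | k. k \<in> X}"
      then obtain k where k: "k \<in> X" "U = X - nest_up X \<L> k" by blast
      then obtain L where "L \<in> \<L>" "is_nest_sup X \<L> L k" "k \<in> X - L"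
        using assms(2) unfolding cond_C3_def by blast
      thus "U \<in> \<L>" using key[OF assms(1)] k by auto
    qed
  next
    show "\<L> \<subseteq> {X - nest_up X \<L> k | k. k \<in> X}"
    proof
      fix L assume L: "L \<in> \<L>"
      then obtain s where "is_nest_sup X \<L> L s" "s \<in> X - L"
        using assms(2) unfolding cond_C3_def cond_C2_def by blast
      thus "L \<in> {X - nest_up X \<L> k | k. k \<in> X}" using key[OF assms(1) _ L] by blast
    qed
  qed
  thus ?thesis unfolding lower_topology_def by simp
qed

end
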